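(* Let $T\in\mathbb{R}$, $\tau>0$, $\gamma>0$, and define $f_\tau:\mathbb{R}\to\mathbb{R}$ by $f_\tau(x)=0$ if $x-T<-\tau/2$, $f_\tau(x)=\frac1\tau(x-T)+\frac12$ if $-\tau/2\le x-T\le\tau/2$, and $f_\tau(x)=1$ if $x-T>\tau/2$. Let $g_E(x,x')=e^{\gamma|x-x'|}$. Then the $g_E$-smooth sensitivity of $f_\tau$, $B^*(x)=\sup_{z\in\mathbb{R}}\frac{\mathrm{L}_{f_\tau,\infty}(z)}{g_E(x,z)}$, satisfies $B^*(x)=\max\left(\frac{1}{|x-T|+\tau/2},\ \frac1\tau e^{-\gamma(|x-T|-\tau/2)}\right)$ if $|x-T|>\tau/2$, and $B^*(x)=\frac1\tau$ if $|x-T|\le\tau/2$.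
   Context: $\mathbb{R}$ carries the metric $|x-x'|$. For $x\in\mathbb{R}$, $\mathrm{L}_{f,\infty}(x)$ is the infimum of all $K$ such that $|f(x)-f(x')|\le K|x-x'|$ for all $x'\in\mathbb{R}$. *)

theory Defs
  imports Complex_Main
begin

definition local_lip_inf :: "(real \<Rightarrow> real) \<Rightarrow> real \<Rightarrow> real" where
  "local_lip_inf f x = Inf {K. \<forall>x'. \<bar>f x - f x'\<bar> \<le> K * \<bar>x - x'\<bar>}"

definition smooth_sensitivity ::
  "(real \<Rightarrow> real \<Rightarrow> real) \<Rightarrow> (real \<Rightarrow> real) \<Rightarrow> real \<Rightarrow> real" where
  "smooth_sensitivity g f x = (SUP z. local_lip_inf f z / g x z)"

definition f_ramp :: "real \<Rightarrow> real \<Rightarrow> real \<Rightarrow> real" where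
  "f_ramp T \<tau> x = (if x - T < - \<tau> / 2 then 0
                    else if x - T \<le> \<tau> / 2 then (x - T) / \<tau> + 1 / 2
                    else 1)"

definition g_E :: "real \<Rightarrow> real \<Rightarrow> real \<Rightarrow> real" where
  "g_E \<gamma> x x' = exp (\<gamma> * \<bar>x - x'\<bar>)"

end

theory Submission
  imports Defs "HOL-Analysis.Analysis"
begin
lemma clamp_lip: "\<bar>max 0 (min 1 p) - max 0 (min 1 q)\<bar> \<le> \<bar>p - q\<bar>" for p q :: real
  by (auto simp: max_def min_def)

lemma lip_global:
  assumes "\<tau> > 0"
  shows "\<bar>f_ramp T \<tau> a - f_ramp T \<tau> b\<bar> \<le> (1/\<tau>) * \<bar>a - b\<bar>"
proof -
  have cl: "\<And>x. f_ramp T \<tau> x = max 0 (min 1 ((x - T)/\<tau> + 1/2))"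
    using assms by (auto simp: f_ramp_def field_simps)
  have "\<bar>max 0 (min 1 ((a - T)/\<tau> + 1/2)) - max 0 (min 1 ((b - T)/\<tau> + 1/2))\<bar>
        \<le> \<bar>((a - T)/\<tau> + 1/2) - ((b - T)/\<tau> + 1/2)\<bar>" by (rule clamp_lip)
  also have "((a - T)/\<tau> + 1/2) - ((b - T)/\<tau> + 1/2) = (a - b)/\<tau>" by (simp add: diff_divide_distrib)
  hence "\<bar>((a - T)/\<tau> + 1/2) - ((b - T)/\<tau> + 1/2)\<bar> = (1/\<tau>) * \<bar>a - b\<bar>" using assms by (simp add: abs_divide)
  finally show ?thesis using cl by simp
qed

lemma lip_right:
  assumes tp: "\<tau> > 0" and zr: "z - T > \<tau>/2"
  shows "\<bar>f_ramp T \<tau> z - f_ramp T \<tau> v\<bar> \<le> (1/(\<bar>z - T\<bar> + \<tau>/2)) * \<bar>z - v\<bar>"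
proof -
  have fz: "f_ramp T \<tau> z = 1" using tp zr by (simp add: f_ramp_def)
  have D: "z - T + \<tau>/2 > 0" using tp zr by simp
  have az: "\<bar>z - T\<bar> = z - T" using zr tp by simp
  show ?thesis
  proof (cases "v - T < -\<tau>/2")
    case True
    hence "f_ramp T \<tau> v = 0" by (simp add: f_ramp_def)
    moreover have "z - T + \<tau>/2 \<le> \<bar>z - v\<bar>" using True by simp
    ultimately show ?thesis using fz D az by (simp add: field_simps)
  next
    case False
    show ?thesis
    proof (cases "v - T \<le> \<tau>/2")
      case True
      hence fv: "f_ramp T \<tau> v = (v - T)/\<tau> + 1/2" using False by (simp add: f_ramp_def)
      have e1: "\<bar>1 - ((v - T)/\<tau> + 1/2)\<bar> = (\<tau>/2 - (v - T))/\<tau>"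
        using True tp by (simp add: field_simps abs_if)
      have zv: "\<bar>z - v\<bar> = z - v" using True zr by simp
      have nn: "(z - T - \<tau>/2) * (\<tau>/2 + (v - T)) \<ge> 0" using False zr by simp
      have eq: "\<tau> * (z - v) - (\<tau>/2 - (v - T)) * (z - T + \<tau>/2) = (z - T - \<tau>/2) * (\<tau>/2 + (v - T))"
        by (simp add: algebra_simps)
      have "(\<tau>/2 - (v - T)) * (z - T + \<tau>/2) \<le> \<tau> * (z - v)" using eq nn by linarith
      hence "(\<tau>/2 - (v - T))/\<tau> \<le> (z - v) / (z - T + \<tau>/2)"
        using tp D apply (simp add: divide_simps) by (simp add: algebra_simps)
      thus ?thesis using fz fv e1 zv az by simp
    next
      case False2: False
      hence "f_ramp T \<tau> v = 1" using False by (simp add: f_ramp_def)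
      thus ?thesis using fz D by simp
    qed
  qed
qed

lemma ramp_refl: "\<tau> > 0 \<Longrightarrow> f_ramp T \<tau> x = 1 - f_ramp (-T) \<tau> (-x)"
  by (auto simp: f_ramp_def field_simps)

lemma lip_left:
  assumes tp: "\<tau> > 0" and zl: "z - T < -\<tau>/2"
  shows "\<bar>f_ramp T \<tau> z - f_ramp T \<tau> v\<bar> \<le> (1/(\<bar>z - T\<bar> + \<tau>/2)) * \<bar>z - v\<bar>"
proof -
  have "\<bar>f_ramp (-T) \<tau> (-z) - f_ramp (-T) \<tau> (-v)\<bar> \<le> (1/(\<bar>-z - -T\<bar> + \<tau>/2)) * \<bar>-z - -v\<bar>"
    using lip_right[OF tp, where T="-T" and z="-z" and v="-v"] zl by simp
  moreover have "\<bar>-z - -T\<bar> = \<bar>z - T\<bar>" "\<bar>-z - -v\<bar> = \<bar>z - v\<bar>" by simp_all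
  moreover have "\<bar>f_ramp T \<tau> z - f_ramp T \<tau> v\<bar> = \<bar>f_ramp (-T) \<tau> (-z) - f_ramp (-T) \<tau> (-v)\<bar>"
    using ramp_refl[OF tp, of T z] ramp_refl[OF tp, of T v] by simp
  ultimately show ?thesis by simp
qed

lemma lip_val:
  assumes tp: "\<tau> > 0"
  shows "local_lip_inf (f_ramp T \<tau>) z = (if \<bar>z - T\<bar> \<le> \<tau>/2 then 1/\<tau> else 1/(\<bar>z - T\<bar> + \<tau>/2))"
  unfolding local_lip_inf_def
proof (rule cInf_eq_minimum)
  show "(if \<bar>z - T\<bar> \<le> \<tau>/2 then 1/\<tau> else 1/(\<bar>z - T\<bar> + \<tau>/2))
      \<in> {K. \<forall>x'. \<bar>f_ramp T \<tau> z - f_ramp T \<tau> x'\<bar> \<le> K * \<bar>z - x'\<bar>}"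
  proof (cases "\<bar>z - T\<bar> \<le> \<tau>/2")
    case True thus ?thesis using lip_global[OF tp, of T z] by (simp add: mult.commute)
  next
    case False
    hence "z - T > \<tau>/2 \<or> z - T < -\<tau>/2" by (cases "z \<ge> T") auto
    thus ?thesis
    proof
      assume "z - T > \<tau>/2" thus ?thesis using False lip_right[OF tp, where z=z and T=T] by auto
    next
      assume "z - T < -\<tau>/2" thus ?thesis using False lip_left[OF tp, where z=z and T=T] by auto
    qed
  qed
next
  fix K assume "K \<in> {K. \<forall>x'. \<bar>f_ramp T \<tau> z - f_ramp T \<tau> x'\<bar> \<le> K * \<bar>z - x'\<bar>}"
  hence K: "\<And>x'. \<bar>f_ramp T \<tau> z - f_ramp T \<tau> x'\<bar> \<le> K * \<bar>z - x'\<bar>" by auto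
  have A: "f_ramp T \<tau> (T + \<tau>/2) = 1" "f_ramp T \<tau> (T - \<tau>/2) = 0"
    using tp by (auto simp: f_ramp_def)
  show "(if \<bar>z - T\<bar> \<le> \<tau>/2 then 1/\<tau> else 1/(\<bar>z - T\<bar> + \<tau>/2)) \<le> K"
  proof (cases "\<bar>z - T\<bar> \<le> \<tau>/2")
    case True
    hence fz: "f_ramp T \<tau> z = (z - T)/\<tau> + 1/2" by (cases "z \<ge> T") (auto simp: f_ramp_def)
    show ?thesis
    proof (cases "z - T \<le> 0")
      case True
      have "\<bar>(z - T)/\<tau> + 1/2 - 1\<bar> \<le> K * \<bar>z - (T + \<tau>/2)\<bar>" using K[of "T + \<tau>/2"] A fz by simp
      moreover have "\<bar>(z - T)/\<tau> + 1/2 - 1\<bar> = (T + \<tau>/2 - z) / \<tau>" "\<bar>z - (T + \<tau>/2)\<bar> = T + \<tau>/2 - z"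
        using True tp by (auto simp: field_simps abs_if)
      ultimately have "(T + \<tau>/2 - z) / \<tau> \<le> K * (T + \<tau>/2 - z)" by simp
      moreover have "T + \<tau>/2 - z > 0" using True tp by simp
      ultimately have "(1/\<tau>) * (T + \<tau>/2 - z) \<le> K * (T + \<tau>/2 - z)" "T + \<tau>/2 - z > 0" by simp_all
      hence "1/\<tau> \<le> K" by (rule mult_right_le_imp_le)
      thus ?thesis using \<open>\<bar>z - T\<bar> \<le> \<tau>/2\<close> by simp
    next
      case False
      have "\<bar>(z - T)/\<tau> + 1/2 - 0\<bar> \<le> K * \<bar>z - (T - \<tau>/2)\<bar>" using K[of "T - \<tau>/2"] A fz by simp
      moreover have "\<bar>(z - T)/\<tau> + 1/2 - 0\<bar> = (z - T + \<tau>/2) / \<tau>" "\<bar>z - (T - \<tau>/2)\<bar> = z - T + \<tau>/2"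
        using False tp by (auto simp: field_simps abs_if)
      ultimately have "(z - T + \<tau>/2) / \<tau> \<le> K * (z - T + \<tau>/2)" by simp
      moreover have "z - T + \<tau>/2 > 0" using False tp by simp
      ultimately have "(1/\<tau>) * (z - T + \<tau>/2) \<le> K * (z - T + \<tau>/2)" "z - T + \<tau>/2 > 0" by simp_all
      hence "1/\<tau> \<le> K" by (rule mult_right_le_imp_le)
      thus ?thesis using \<open>\<bar>z - T\<bar> \<le> \<tau>/2\<close> by simp
    qed
  next
    case False
    show ?thesis
    proof (cases "z - T > 0")
      case True
      hence fz: "f_ramp T \<tau> z = 1" using False tp by (auto simp: f_ramp_def)
      have "1 \<le> K * (z - (T - \<tau>/2))" using K[of "T - \<tau>/2"] A fz True tp by simp
      moreover have "z - (T - \<tau>/2) = \<bar>z - T\<bar> + \<tau>/2" using True by simp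
      ultimately have "1 \<le> K * (\<bar>z - T\<bar> + \<tau>/2)" by simp
      moreover have "\<bar>z - T\<bar> + \<tau>/2 > 0" using tp by simp
      ultimately show ?thesis using False by (simp add: divide_le_eq mult.commute)
    next
      case False2: False
      hence fz: "f_ramp T \<tau> z = 0" using False by (auto simp: f_ramp_def)
      have "1 \<le> K * \<bar>z - (T + \<tau>/2)\<bar>" using K[of "T + \<tau>/2"] A fz by simp
      moreover have "\<bar>z - (T + \<tau>/2)\<bar> = \<bar>z - T\<bar> + \<tau>/2" using False2 tp by simp
      ultimately have "1 \<le> K * (\<bar>z - T\<bar> + \<tau>/2)" by simp
      moreover have "\<bar>z - T\<bar> + \<tau>/2 > 0" using tp by simp
      ultimately show ?thesis using False by (simp add: divide_le_eq mult.commute)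
    qed
  qed
qed
lemma key:
  fixes a p P g :: real
  assumes "0 < a" "a \<le> p" "p \<le> P"
  shows "exp (- g * (P - p)) / p \<le> max (exp (- g * (P - a)) / a) (1 / P)"
proof (cases "P = a")
  case True thus ?thesis using assms by simp
next
  case False
  hence Pa: "P > a" using assms by simp
  define t where "t = (p - a) / (P - a)"
  have t0: "0 \<le> t" "t \<le> 1" using assms Pa by (auto simp: t_def field_simps)
  have tp: "t * (P - a) = p - a" using Pa by (simp add: t_def)
  have pt: "p = (1 - t) * a + t * P" using tp by (simp add: algebra_simps)
  have "ln ((1 - t) *\<^sub>R a + t *\<^sub>R P) \<ge> (1 - t) * ln a + t * ln P"
    using concave_onD[OF ln_concave, of t a P] t0 assms Pa by auto
  moreover have "(1 - t) *\<^sub>R a + t *\<^sub>R P = p" using pt by simp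
  ultimately have lnp: "ln p \<ge> (1 - t) * ln a + t * ln P" by simp
  have gp: "g*p = (1-t)*(g*a) + t*(g*P)" by (subst pt) (simp add: algebra_simps)
  define m where "m = max (g * a - ln a) (g * P - ln P)"
  have "g * p - ln p \<le> (1 - t) * (g * a - ln a) + t * (g * P - ln P)"
    using lnp gp by (simp add: algebra_simps)
  also have "\<dots> \<le> (1 - t) * m + t * m"
    using t0 by (intro add_mono mult_left_mono) (auto simp: m_def)
  finally have le: "g * p - ln p \<le> m" by (simp add: algebra_simps)
  have pp: "p > 0" "P > 0" using assms by auto
  have "exp (- g * (P - p)) / p = exp (g * p - ln p) * exp (- g * P)"
    using pp by (simp add: exp_diff exp_minus field_simps mult_exp_exp algebra_simps)
  also have "\<dots> \<le> exp m * exp (- g * P)" using le by simp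
  also have "\<dots> = max (exp (g * a - ln a) * exp (- g * P)) (exp (g * P - ln P) * exp (- g * P))"
    by (simp add: m_def max_def)
  also have "\<dots> = max (exp (- g * (P - a)) / a) (1 / P)"
    using pp assms by (simp add: exp_diff exp_minus field_simps mult_exp_exp algebra_simps)
  finally show ?thesis .
qed

lemma decay:
  fixes c m w g :: real
  assumes "0 \<le> c" "m \<le> w" "g > 0"
  shows "c / exp (g * w) \<le> c * exp (- g * m)"
proof -
  have "c / exp (g * w) = c * exp (- g * w)" by (simp add: exp_minus divide_inverse)
  also have "\<dots> \<le> c * exp (- g * m)" using assms by (intro mult_left_mono) auto
  finally show ?thesis .
qed

theorem mainTheorem8:
  fixes T \<tau> \<gamma> x :: real
  assumes "\<tau> > 0" and "\<gamma> > 0"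
  shows "(\<bar>x - T\<bar> > \<tau> / 2 \<longrightarrow>
            smooth_sensitivity (g_E \<gamma>) (f_ramp T \<tau>) x =
              max (1 / (\<bar>x - T\<bar> + \<tau> / 2)) ((1 / \<tau>) * exp (- \<gamma> * (\<bar>x - T\<bar> - \<tau> / 2))))
       \<and> (\<bar>x - T\<bar> \<le> \<tau> / 2 \<longrightarrow>
            smooth_sensitivity (g_E \<gamma>) (f_ramp T \<tau>) x = 1 / \<tau>)"
proof -
  note tp = assms(1) and gp = assms(2)
  define L where "L z = (if \<bar>z - T\<bar> \<le> \<tau>/2 then 1/\<tau> else 1/(\<bar>z - T\<bar> + \<tau>/2))" for z
  define h where "h z = L z / exp (\<gamma> * \<bar>x - z\<bar>)" for z
  have SS: "smooth_sensitivity (g_E \<gamma>) (f_ramp T \<tau>) x = Sup (range h)"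
    unfolding smooth_sensitivity_def g_E_def h_def L_def lip_val[OF tp] by simp
  have L0: "L z \<ge> 0" for z using tp by (simp add: L_def)
  have Lt: "L z \<le> 1/\<tau>" for z
    using tp by (auto simp: L_def divide_simps)
  have hL: "h z \<le> L z" for z
  proof -
    have "exp (\<gamma> * \<bar>x - z\<bar>) \<ge> 1" using gp by simp
    thus ?thesis using L0[of z] divide_left_mono[of 1 "exp (\<gamma> * \<bar>x - z\<bar>)" "L z"]
      unfolding h_def by simp
  qed
  have rt: "\<bar>x - T\<bar> - \<bar>z - T\<bar> \<le> \<bar>x - z\<bar>" for z by linarith
  show ?thesis
  proof (intro conjI impI)
    assume d: "\<bar>x - T\<bar> \<le> \<tau>/2"
    have "Sup (range h) = 1/\<tau>"
    proof (rule cSup_eq_maximum)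
      show "1/\<tau> \<in> range h" using d by (intro range_eqI[of _ _ x]) (simp add: h_def L_def)
    next
      fix y assume "y \<in> range h" then obtain z where "y = h z" by auto
      thus "y \<le> 1/\<tau>" using hL[of z] Lt[of z] by simp
    qed
    thus "smooth_sensitivity (g_E \<gamma>) (f_ramp T \<tau>) x = 1/\<tau>" using SS by simp
  next
    assume d: "\<bar>x - T\<bar> > \<tau>/2"
    define M1 where "M1 = 1 / (\<bar>x - T\<bar> + \<tau> / 2)"
    define M2 where "M2 = (1 / \<tau>) * exp (- \<gamma> * (\<bar>x - T\<bar> - \<tau> / 2))"
    have hx: "h x = M1" using d by (simp add: h_def L_def M1_def)
    define zb where "zb = (if x \<ge> T then T + \<tau>/2 else T - \<tau>/2)"
    have zb1: "\<bar>zb - T\<bar> = \<tau>/2" using tp by (simp add: zb_def)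
    have zb2: "\<bar>x - zb\<bar> = \<bar>x - T\<bar> - \<tau>/2" using d tp by (auto simp: zb_def)
    have e: "exp (- \<gamma> * w) = 1 / (exp (\<gamma> * w))" for w by (simp add: exp_minus inverse_eq_divide)
    have "h zb = (1/\<tau>) / exp (\<gamma> * (\<bar>x - T\<bar> - \<tau>/2))" using zb1 zb2 by (simp add: h_def L_def)
    hence hzb: "h zb = M2" unfolding M2_def e by simp
    have "Sup (range h) = max M1 M2"
    proof (rule cSup_eq_maximum)
      show "max M1 M2 \<in> range h" using hx hzb by (auto simp: max_def)
    next
      fix y assume "y \<in> range h" then obtain z where yz: "y = h z" by auto
      show "y \<le> max M1 M2"
      proof (cases "\<bar>z - T\<bar> \<le> \<tau>/2")
        case True
        have "h z = (1/\<tau>) / exp (\<gamma> * \<bar>x - z\<bar>)" using True by (simp add: h_def L_def)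
        also have "\<dots> \<le> (1/\<tau>) * exp (- \<gamma> * (\<bar>x - T\<bar> - \<tau> / 2))"
          using tp gp True rt[of z] by (intro decay) auto
        finally show ?thesis using yz by (simp add: M2_def)
      next
        case False
        hence Lz: "L z = 1/(\<bar>z - T\<bar> + \<tau>/2)" by (simp add: L_def)
        show ?thesis
        proof (cases "\<bar>z - T\<bar> \<ge> \<bar>x - T\<bar>")
          case True
          have "h z \<le> 1/(\<bar>z - T\<bar> + \<tau>/2)" using hL[of z] Lz by simp
          also have "\<dots> \<le> M1" unfolding M1_def using True tp d
            by (intro divide_left_mono) auto
          finally show ?thesis using yz by simp
        next
          case False2: False
          have "h z = (1/(\<bar>z - T\<bar> + \<tau>/2)) / exp (\<gamma> * \<bar>x - z\<bar>)" using Lz by (simp add: h_def)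
          also have "\<dots> \<le> (1/(\<bar>z - T\<bar> + \<tau>/2)) * exp (- \<gamma> * (\<bar>x - T\<bar> - \<bar>z - T\<bar>))"
            using tp gp rt[of z] by (intro decay) auto
          also have "\<dots> = exp (- \<gamma> * ((\<bar>x - T\<bar> + \<tau>/2) - (\<bar>z - T\<bar> + \<tau>/2))) / (\<bar>z - T\<bar> + \<tau>/2)"
            by simp
          also have "\<dots> \<le> max (exp (- \<gamma> * ((\<bar>x - T\<bar> + \<tau>/2) - \<tau>)) / \<tau>) (1 / (\<bar>x - T\<bar> + \<tau>/2))"
            using tp False False2 by (intro key) auto
          also have "\<dots> = max M2 M1"
            by (simp add: M1_def M2_def algebra_simps)
          finally show ?thesis using yz by (simp add: max.commute)
        qed
      qed
    qed
    thus "smooth_sensitivity (g_E \<gamma>) (f_ramp T \<tau>) x =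
              max (1 / (\<bar>x - T\<bar> + \<tau> / 2)) ((1 / \<tau>) * exp (- \<gamma> * (\<bar>x - T\<bar> - \<tau> / 2)))"
      using SS by (simp add: M1_def M2_def)
  qed
qed

end
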